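(* For every integer $n \geq 5$, the Roman domination number of the generalized Petersen graph $P(n,2)$ is $$\gamma_R(P(n,2)) = \left\lceil \frac{8n}{7} \right\rceil .$$
   Context: For integers $n \ge 3$ and $1 \le k < n/2$, the generalized Petersen graph $P(n,k)$ has vertex set $\{v_i, u_i : 0 \le i \le n-1\}$ and edge set $\{v_iv_{i+1},\ v_iu_i,\ u_iu_{i+k} : 0 \le i \le n-1\}$, with subscripts taken modulo $n$. A Roman domination function (RDF) of a graph $G$ is a function $f: V(G)\to\{0,1,2\}$ such that every vertex $u$ with $f(u)=0$ is adjacent to at least one vertex $v$ with $f(v)=2$. Its weight is $\sum_{u\in V(G)} f(u)$. The Roman domination number $\gamma_R(G)$ is the minimum weight of an RDF of $G$. *)

theory Defs
  imports Complex_Main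
begin

(* Generalized Petersen graph P(n,k).
   Vertex (False, i) represents v_i, vertex (True, i) represents u_i, for 0 <= i < n. *)
definition gp_vertices :: "nat \<Rightarrow> (bool \<times> nat) set" where
  "gp_vertices n = UNIV \<times> {..<n}"

definition gp_edge :: "nat \<Rightarrow> nat \<Rightarrow> bool \<times> nat \<Rightarrow> bool \<times> nat \<Rightarrow> bool" where
  "gp_edge n k x y \<longleftrightarrow>
     (\<exists>i<n.
        ({x, y} = {(False, i), (False, (i + 1) mod n)}) \<or>
        ({x, y} = {(False, i), (True, i)}) \<or>
        ({x, y} = {(True, i), (True, (i + k) mod n)}))"

definition is_rdf :: "'a set \<Rightarrow> ('a \<Rightarrow> 'a \<Rightarrow> bool) \<Rightarrow> ('a \<Rightarrow> nat) \<Rightarrow> bool" where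
  "is_rdf V E f \<longleftrightarrow>
     (\<forall>u\<in>V. f u \<in> {0, 1, 2}) \<and>
     (\<forall>u\<in>V. f u = 0 \<longrightarrow> (\<exists>v\<in>V. E u v \<and> f v = 2))"

definition rdf_weight :: "'a set \<Rightarrow> ('a \<Rightarrow> nat) \<Rightarrow> nat" where
  "rdf_weight V f = (\<Sum>u\<in>V. f u)"

definition roman_domination_number :: "'a set \<Rightarrow> ('a \<Rightarrow> 'a \<Rightarrow> bool) \<Rightarrow> nat" where
  "roman_domination_number V E = Min {rdf_weight V f | f. is_rdf V E f}"

end

theory Submission
  imports Defs
begin


definition pot :: "nat \<Rightarrow> nat \<Rightarrow> nat \<Rightarrow> int" where
  "pot a b c = [-26, -19, 0, -19, -16, 0, -15, -15, 0, -19, -12, -13, -18, -11, -7, -8, -8, -7, 0, -13, -6, 0, -10, 0, 0, -1, 0] ! (9*a+3*b+c)"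

definition nv :: "nat \<Rightarrow> nat \<Rightarrow> nat \<Rightarrow> nat" where
  "nv a x y = (if x = 2 then 2 else if x = 0 \<and> a \<noteq> 2 \<and> y \<noteq> 2 then 0 else 1)"
definition nu :: "nat \<Rightarrow> nat \<Rightarrow> nat \<Rightarrow> nat" where
  "nu b x y = (if y = 2 then 2 else if y = 0 \<and> x \<noteq> 2 \<and> b \<noteq> 2 then 0 else 1)"

lemma three: "(a::nat) \<le> 2 \<Longrightarrow> a = 0 \<or> a = 1 \<or> a = 2" by auto

lemma step:
  assumes "a \<le> 2" "b \<le> 2" "c \<le> 2" "x \<le> 2" "y \<le> 2" "a = 0 \<longrightarrow> x = 2" "b = 0 \<longrightarrow> y = 2"
  shows "pot (nv a x y) c (nu b x y) + 8 \<le> 7 * int (x + y) + pot a b c"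
  using three[OF assms(1)] three[OF assms(2)] three[OF assms(3)] three[OF assms(4)] three[OF assms(5)] assms(6,7)
  by (elim disjE) (simp_all add: pot_def nv_def nu_def)

lemma modA: "(n::nat) \<ge> 2 \<Longrightarrow> i < n \<Longrightarrow> ((i+1) mod n + n - 1) mod n = i"
proof -
  assume a: "n \<ge> 2" "i < n"
  have "((i+1) mod n + n - 1) mod n = ((i+1) mod n + (n - 1)) mod n" using a by simp
  also have "\<dots> = (i + 1 + (n-1)) mod n" by (simp add: mod_add_left_eq)
  also have "\<dots> = i" using a by simp
  finally show ?thesis .
qed

lemma modB: "(n::nat) \<ge> 2 \<Longrightarrow> i < n \<Longrightarrow> ((i+1) mod n + n - 2) mod n = (i + n - 1) mod n"
proof -
  assume a: "n \<ge> 2" "i < n"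
  have "((i+1) mod n + n - 2) mod n = ((i+1) mod n + (n - 2)) mod n" using a by simp
  also have "\<dots> = (i + 1 + (n-2)) mod n" by (simp add: mod_add_left_eq)
  also have "i + 1 + (n-2) = i + n - 1" using a by simp
  finally show ?thesis .
qed

lemma modC: "(n::nat) \<ge> 2 \<Longrightarrow> i < n \<Longrightarrow> ((i + n - 1) mod n + 2) mod n = (i + 1) mod n"
proof -
  assume a: "n \<ge> 2" "i < n"
  have "((i + n - 1) mod n + 2) mod n = (i + n - 1 + 2) mod n" by (rule mod_add_left_eq)
  also have "i + n - 1 + 2 = (i + 1) + n" using a by simp
  also have "((i + 1) + n) mod n = (i+1) mod n" by (rule mod_add_self2)
  finally show ?thesis .
qed

lemma modD: "(n::nat) \<ge> 2 \<Longrightarrow> i < n \<Longrightarrow> ((i + n - 1) mod n + n - 1) mod n = (i + n - 2) mod n"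
proof -
  assume a: "n \<ge> 2" "i < n"
  have "((i + n - 1) mod n + n - 1) mod n = ((i + n - 1) mod n + (n - 1)) mod n" using a by simp
  also have "\<dots> = (i + n - 1 + (n-1)) mod n" by (simp add: mod_add_left_eq)
  also have "i + n - 1 + (n-1) = (i + n - 2) + n" using a by simp
  also have "((i + n - 2) + n) mod n = (i + n - 2) mod n" by (rule mod_add_self2)
  finally show ?thesis .
qed

lemma inv1: "(n::nat) \<ge> 2 \<Longrightarrow> i < n \<Longrightarrow> j = (i+1) mod n \<Longrightarrow> i = (j + n - 1) mod n"
  using modA by simp

lemma inv2: "(n::nat) \<ge> 2 \<Longrightarrow> i < n \<Longrightarrow> j = (i+2) mod n \<Longrightarrow> i = (j + n - 2) mod n"
proof -
  assume a: "n \<ge> 2" "i < n" "j = (i+2) mod n"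
  have "(j + n - 2) mod n = ((i+2) mod n + (n - 2)) mod n" using a by simp
  also have "\<dots> = (i + 2 + (n-2)) mod n" by (simp add: mod_add_left_eq)
  also have "i + 2 + (n-2) = i + n" using a by simp
  finally show ?thesis using a by simp
qed

lemma nbr_v:
  assumes "n \<ge> 2" "j < n" "gp_edge n 2 (False,j) y"
  shows "y = (False,(j+1) mod n) \<or> y = (False,(j+n-1) mod n) \<or> y = (True,j)"
  using assms unfolding gp_edge_def
  by (auto simp: doubleton_eq_iff dest: inv1[OF assms(1)])

lemma nbr_u:
  assumes "n \<ge> 2" "j < n" "gp_edge n 2 (True,j) y"
  shows "y = (True,(j+2) mod n) \<or> y = (True,(j+n-2) mod n) \<or> y = (False,j)"
  using assms unfolding gp_edge_def
  by (auto simp: doubleton_eq_iff dest: inv2[OF assms(1)])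

lemma sum_shift: "(n::nat) > 0 \<Longrightarrow> (\<Sum>i<n. g ((i+1) mod n)) = (\<Sum>i<n. (g i :: int))"
proof -
  assume "n > 0"
  then obtain m where m: "n = Suc m" by (cases n) auto
  have "(\<Sum>i<Suc m. g ((i+1) mod Suc m)) = (\<Sum>i<m. g ((i+1) mod Suc m)) + g 0"
    by (simp add: sum.lessThan_Suc)
  also have "(\<Sum>i<m. g ((i+1) mod Suc m)) = (\<Sum>i<m. g (Suc i))"
    by (rule sum.cong) auto
  also have "(\<Sum>i<m. g (Suc i)) + g 0 = (\<Sum>i<Suc m. g i)"
    by (subst sum.lessThan_Suc_shift) simp
  finally show ?thesis using m by simp
qed

lemma weight_eq: "rdf_weight (gp_vertices n) f = (\<Sum>i<n. f (False,i) + f (True,i))"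
proof -
  have "rdf_weight (gp_vertices n) f = (\<Sum>b\<in>(UNIV::bool set). \<Sum>i\<in>{..<n}. f (b,i))"
    unfolding rdf_weight_def gp_vertices_def by (simp add: sum.cartesian_product)
  also have "\<dots> = (\<Sum>i<n. f (False,i)) + (\<Sum>i<n. f (True,i))"
    by (simp add: UNIV_bool)
  finally show ?thesis by (simp add: sum.distrib)
qed

definition stv :: "nat \<Rightarrow> (bool \<times> nat \<Rightarrow> nat) \<Rightarrow> nat \<Rightarrow> nat" where
  "stv n f i = (if f (False,i) = 2 then 2 else
     if f (False,i) = 0 \<and> f (False,(i+n-1) mod n) \<noteq> 2 \<and> f (True,i) \<noteq> 2 then 0 else 1)"
definition stu :: "nat \<Rightarrow> (bool \<times> nat \<Rightarrow> nat) \<Rightarrow> nat \<Rightarrow> nat" where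
  "stu n f i = (if f (True,i) = 2 then 2 else
     if f (True,i) = 0 \<and> f (True,(i+n-2) mod n) \<noteq> 2 \<and> f (False,i) \<noteq> 2 then 0 else 1)"

lemma rdf_facts:
  assumes n: "n \<ge> 5" and r: "is_rdf (gp_vertices n) (gp_edge n 2) f" and i: "i < n"
  shows "f (False,i) \<le> 2" "f (True,i) \<le> 2"
    "f (False,i) = 0 \<Longrightarrow> f (False,(i+1) mod n) = 2 \<or> f (False,(i+n-1) mod n) = 2 \<or> f (True,i) = 2"
    "f (True,i) = 0 \<Longrightarrow> f (True,(i+2) mod n) = 2 \<or> f (True,(i+n-2) mod n) = 2 \<or> f (False,i) = 2"
proof -
  have V: "(b,i) \<in> gp_vertices n" for b using i by (simp add: gp_vertices_def)
  show "f (False,i) \<le> 2" using r V[of False] unfolding is_rdf_def by fastforce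
  show "f (True,i) \<le> 2" using r V[of True] unfolding is_rdf_def by fastforce
  show "f (False,i) = 0 \<Longrightarrow> f (False,(i+1) mod n) = 2 \<or> f (False,(i+n-1) mod n) = 2 \<or> f (True,i) = 2"
  proof -
    assume "f (False,i) = 0"
    then obtain y where "gp_edge n 2 (False,i) y" "f y = 2" using r V unfolding is_rdf_def by blast
    then show ?thesis using nbr_v[of n i y] n i by auto
  qed
  show "f (True,i) = 0 \<Longrightarrow> f (True,(i+2) mod n) = 2 \<or> f (True,(i+n-2) mod n) = 2 \<or> f (False,i) = 2"
  proof -
    assume "f (True,i) = 0"
    then obtain y where "gp_edge n 2 (True,i) y" "f y = 2" using r V unfolding is_rdf_def by blast
    then show ?thesis using nbr_u[of n i y] n i by auto
  qed
qed

lemma local_step: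
  assumes n: "n \<ge> 5" and r: "is_rdf (gp_vertices n) (gp_edge n 2) f" and i: "i < n"
  defines "g \<equiv> \<lambda>i. pot (stv n f i) (stu n f ((i+n-1) mod n)) (stu n f i)"
  shows "g ((i+1) mod n) + 8 \<le> 7 * int (f (False,(i+1) mod n) + f (True,(i+1) mod n)) + g i"
proof -
  let ?s = "(i+1) mod n" and ?p = "(i+n-1) mod n"
  have sn: "?s < n" "?p < n" using n by auto
  have A: "(?s + n - 1) mod n = i" using modA n i by simp
  have B: "(?s + n - 2) mod n = ?p" using modB n i by simp
  have C: "(?p + 2) mod n = ?s" using modC n i by simp
  have e1: "stv n f ?s = nv (stv n f i) (f (False,?s)) (f (True,?s))"
    unfolding stv_def nv_def A by auto
  have e2: "stu n f ((?s+n-1) mod n) = stu n f i" using A by simp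
  have e3: "stu n f ?s = nu (stu n f ?p) (f (False,?s)) (f (True,?s))"
    unfolding stu_def nu_def B by auto
  have c1: "stv n f i = 0 \<longrightarrow> f (False,?s) = 2"
    using rdf_facts(3)[OF n r i] unfolding stv_def by (auto split: if_splits)
  have c2: "stu n f ?p = 0 \<longrightarrow> f (True,?s) = 2"
    using rdf_facts(4)[OF n r sn(2)] C unfolding stu_def by (auto split: if_splits)
  have "pot (nv (stv n f i) (f (False,?s)) (f (True,?s))) (stu n f i) (nu (stu n f ?p) (f (False,?s)) (f (True,?s))) + 8
      \<le> 7 * int (f (False,?s) + f (True,?s)) + pot (stv n f i) (stu n f ?p) (stu n f i)"
  proof (rule step)
    show "stv n f i \<le> 2" "stu n f ?p \<le> 2" "stu n f i \<le> 2" by (auto simp: stv_def stu_def)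
    show "f (False,?s) \<le> 2" "f (True,?s) \<le> 2" using rdf_facts(1,2)[OF n r sn(1)] .
    show "stv n f i = 0 \<longrightarrow> f (False,?s) = 2" by (rule c1)
    show "stu n f ?p = 0 \<longrightarrow> f (True,?s) = 2" by (rule c2)
  qed
  then show ?thesis unfolding g_def using e1 e2 e3 by simp
qed

lemma lower:
  assumes n: "n \<ge> 5" and r: "is_rdf (gp_vertices n) (gp_edge n 2) f"
  shows "8 * n \<le> 7 * rdf_weight (gp_vertices n) f"
proof -
  define g where "g \<equiv> \<lambda>i. pot (stv n f i) (stu n f ((i+n-1) mod n)) (stu n f i)"
  define w where "w \<equiv> \<lambda>i. int (f (False,i) + f (True,i))"
  have "(\<Sum>i<n. g ((i+1) mod n) + 8) \<le> (\<Sum>i<n. 7 * w ((i+1) mod n) + g i)"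
    by (rule sum_mono) (use local_step[OF n r] in \<open>auto simp: g_def w_def\<close>)
  also have "\<dots> = 7 * (\<Sum>i<n. w ((i+1) mod n)) + (\<Sum>i<n. g i)"
    by (simp add: sum.distrib sum_distrib_left)
  also have "(\<Sum>i<n. w ((i+1) mod n)) = (\<Sum>i<n. w i)" using sum_shift n by simp
  finally have "(\<Sum>i<n. g i) + 8 * int n \<le> 7 * (\<Sum>i<n. w i) + (\<Sum>i<n. g i)"
    using sum_shift[of n g] n by (simp add: sum.distrib)
  then have "8 * int n \<le> 7 * (\<Sum>i<n. w i)" by simp
  moreover have "(\<Sum>i<n. w i) = int (rdf_weight (gp_vertices n) f)"
    unfolding weight_eq w_def by simp
  ultimately show ?thesis by simp
qed



definition okw :: "nat\<times>nat \<Rightarrow> nat\<times>nat \<Rightarrow> nat\<times>nat \<Rightarrow> nat\<times>nat \<Rightarrow> nat\<times>nat \<Rightarrow> bool" where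
  "okw l2 l1 x r1 r2 \<longleftrightarrow> (fst x = 0 \<longrightarrow> fst r1 = 2 \<or> fst l1 = 2 \<or> snd x = 2) \<and>
                         (snd x = 0 \<longrightarrow> snd r2 = 2 \<or> snd l2 = 2 \<or> fst x = 2)"

definition fc :: "(nat \<Rightarrow> nat\<times>nat) \<Rightarrow> bool\<times>nat \<Rightarrow> nat" where
  "fc c = (\<lambda>(b,i). if b then snd (c i) else fst (c i))"

lemma modE: "(n::nat) \<ge> 2 \<Longrightarrow> i < n \<Longrightarrow> ((i + n - 1) mod n + 1) mod n = i"
proof -
  assume a: "n \<ge> 2" "i < n"
  have "((i + n - 1) mod n + 1) mod n = (i + n - 1 + 1) mod n" by (rule mod_add_left_eq)
  also have "i + n - 1 + 1 = i + n" using a by simp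
  finally show ?thesis using a by simp
qed

lemma modF: "(n::nat) \<ge> 2 \<Longrightarrow> i < n \<Longrightarrow> ((i + n - 2) mod n + 2) mod n = i"
proof -
  assume a: "n \<ge> 2" "i < n"
  have "((i + n - 2) mod n + 2) mod n = (i + n - 2 + 2) mod n" by (rule mod_add_left_eq)
  also have "i + n - 2 + 2 = i + n" using a by simp
  finally show ?thesis using a by simp
qed

lemma rdf_of_cond:
  assumes n: "n \<ge> 5"
    and vals: "\<And>i. i < n \<Longrightarrow> fst (c i) \<le> 2 \<and> snd (c i) \<le> 2"
    and ok: "\<And>i. i < n \<Longrightarrow> okw (c ((i+n-2) mod n)) (c ((i+n-1) mod n)) (c i) (c ((i+1) mod n)) (c ((i+2) mod n))"
  shows "is_rdf (gp_vertices n) (gp_edge n 2) (fc c)"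
  unfolding is_rdf_def
proof (intro conjI ballI impI)
  fix u assume u: "u \<in> gp_vertices n"
  then obtain b i where bi: "u = (b,i)" "i < n" by (auto simp: gp_vertices_def)
  show "fc c u \<in> {0,1,2}" using vals[OF bi(2)] bi by (auto simp: fc_def)
next
  fix u assume u: "u \<in> gp_vertices n" and z: "fc c u = 0"
  then obtain b i where bi: "u = (b,i)" "i < n" by (auto simp: gp_vertices_def)
  have V: "(b', j mod n) \<in> gp_vertices n" for b' j using n by (simp add: gp_vertices_def)
  have ok': "okw (c ((i+n-2) mod n)) (c ((i+n-1) mod n)) (c i) (c ((i+1) mod n)) (c ((i+2) mod n))"
    using ok[OF bi(2)] .
  have e1: "gp_edge n 2 (False,i) (False,(i+1) mod n)" using bi n unfolding gp_edge_def by blast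
  have e2: "gp_edge n 2 (False,i) (False,(i+n-1) mod n)"
    unfolding gp_edge_def
    by (rule exI[of _ "(i+n-1) mod n"]) (use n modE[of n i] bi in \<open>auto simp: doubleton_eq_iff\<close>)
  have e3: "gp_edge n 2 (False,i) (True,i)" using bi n unfolding gp_edge_def by blast
  have e3': "gp_edge n 2 (True,i) (False,i)" using bi n unfolding gp_edge_def
    by (auto simp: doubleton_eq_iff)
  have e4: "gp_edge n 2 (True,i) (True,(i+2) mod n)" using bi n unfolding gp_edge_def by blast
  have e5: "gp_edge n 2 (True,i) (True,(i+n-2) mod n)"
    unfolding gp_edge_def
    by (rule exI[of _ "(i+n-2) mod n"]) (use n modF[of n i] bi in \<open>auto simp: doubleton_eq_iff\<close>)
  have Vi: "(b', i) \<in> gp_vertices n" for b' using bi by (simp add: gp_vertices_def)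
  show "\<exists>v\<in>gp_vertices n. gp_edge n 2 u v \<and> fc c v = 2"
  proof (cases b)
    case False
    then have "fst (c i) = 0" using z bi by (simp add: fc_def)
    then have "fst (c ((i+1) mod n)) = 2 \<or> fst (c ((i+n-1) mod n)) = 2 \<or> snd (c i) = 2"
      using ok' by (simp add: okw_def)
    then show ?thesis using e1 e2 e3 V Vi bi False by (auto simp: fc_def)
  next
    case True
    then have "snd (c i) = 0" using z bi by (simp add: fc_def)
    then have "snd (c ((i+2) mod n)) = 2 \<or> snd (c ((i+n-2) mod n)) = 2 \<or> fst (c i) = 2"
      using ok' by (simp add: okw_def)
    then show ?thesis using e4 e5 e3' V Vi bi True by (auto simp: fc_def)
  qed
qed

definition P7 :: "(nat\<times>nat) list" where
  "P7 = [(0,2),(1,0),(0,0),(2,0),(0,0),(1,0),(0,2)]"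

definition gcol :: "(nat\<times>nat) list \<Rightarrow> nat \<Rightarrow> nat\<times>nat" where
  "gcol T i = (if i < length T then T ! i else P7 ! ((i - length T) mod 7))"

definition tail_ok :: "(nat\<times>nat) list \<Rightarrow> bool" where
  "tail_ok T \<longleftrightarrow> snd (gcol T 0) = 2 \<and>
     okw (P7!5) (P7!6) (gcol T 0) (gcol T 1) (gcol T 2) \<and>
     okw (P7!6) (gcol T 0) (gcol T 1) (gcol T 2) (gcol T 3) \<and>
     list_all (\<lambda>i. okw (gcol T (i-2)) (gcol T (i-1)) (gcol T i) (gcol T (i+1)) (gcol T (i+2))) [2..<length T + 2] \<and>
     list_all (\<lambda>p. fst p \<le> 2 \<and> snd p \<le> 2) T"

lemma seven: "(k::nat) < 7 \<Longrightarrow> k = 0 \<or> k = 1 \<or> k = 2 \<or> k = 3 \<or> k = 4 \<or> k = 5 \<or> k = 6" by arith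

lemma P7_ok: "k < 7 \<Longrightarrow> okw (P7!((k+5) mod 7)) (P7!((k+6) mod 7)) (P7!k) (P7!((k+1) mod 7)) (P7!((k+2) mod 7))"
  by (drule seven) (elim disjE; simp add: P7_def okw_def)

lemma P7_vals: "k < 7 \<Longrightarrow> fst (P7!k) \<le> 2 \<and> snd (P7!k) \<le> 2"
  by (drule seven) (elim disjE; simp add: P7_def)

lemma gcol_per: "i \<ge> length T \<Longrightarrow> gcol T i = P7 ! ((i - length T) mod 7)"
  by (simp add: gcol_def)

lemma generic_ok:
  assumes T: "tail_ok T" and n: "n = length T + 7*q" and q: "q \<ge> 1" and i: "i < n"
  shows "okw (gcol T ((i+n-2) mod n)) (gcol T ((i+n-1) mod n)) (gcol T i) (gcol T ((i+1) mod n)) (gcol T ((i+2) mod n))"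
proof -
  let ?t = "length T"
  have n7: "n \<ge> ?t + 7" using n q by simp
  have last1: "gcol T (n-1) = P7!6"
  proof -
    have "n - 1 - ?t = 6 + 7*(q-1)" using n q by simp
    then have "(n - 1 - ?t) mod 7 = 6" by simp
    then show ?thesis using n7 gcol_per[of T "n-1"] by simp
  qed
  have last2: "gcol T (n-2) = P7!5"
  proof -
    have "n - 2 - ?t = 5 + 7*(q-1)" using n q by simp
    then have "(n - 2 - ?t) mod 7 = 5" by simp
    then show ?thesis using n7 gcol_per[of T "n-2"] by simp
  qed
  have Tc: "snd (gcol T 0) = 2"
    "okw (P7!5) (P7!6) (gcol T 0) (gcol T 1) (gcol T 2)"
    "okw (P7!6) (gcol T 0) (gcol T 1) (gcol T 2) (gcol T 3)"
    using T unfolding tail_ok_def by auto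
  have Tc4: "okw (gcol T (i-2)) (gcol T (i-1)) (gcol T i) (gcol T (i+1)) (gcol T (i+2))"
    if "2 \<le> i" "i < ?t + 2" for i
  proof -
    have L: "list_all (\<lambda>i. okw (gcol T (i-2)) (gcol T (i-1)) (gcol T i) (gcol T (i+1)) (gcol T (i+2))) [2..<?t + 2]"
      using T unfolding tail_ok_def by blast
    have "\<forall>x\<in>set [2..<?t + 2]. okw (gcol T (x-2)) (gcol T (x-1)) (gcol T x) (gcol T (x+1)) (gcol T (x+2))"
      using L by (simp only: list_all_iff)
    moreover have "i \<in> set [2..<?t + 2]" unfolding set_upt using that by simp
    ultimately show ?thesis by blast
  qed
  consider "i = n - 1" | "i = n - 2" | "i = 0" | "i = 1" | "2 \<le> i" "i + 2 < n" using i n7 by linarith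
  then show ?thesis
  proof cases
    case 1
    then show ?thesis using last1 by (simp add: okw_def P7_def)
  next
    case 2
    have "i + 2 = n" using 2 n7 by simp
    then have "(i+2) mod n = 0" by simp
    then show ?thesis using 2 last2 Tc(1) by (simp add: okw_def P7_def)
  next
    case 3
    have "(i+n-2) mod n = n-2" "(i+n-1) mod n = n-1" "(i+1) mod n = 1" "(i+2) mod n = 2"
      using 3 n7 by auto
    then show ?thesis using 3 last1 last2 Tc(2) by simp
  next
    case 4
    have "(i+n-2) mod n = n-1" "(i+n-1) mod n = 0" "(i+1) mod n = 2" "(i+2) mod n = 3"
      using 4 n7 by auto
    then show ?thesis using 4 last1 Tc(3) by simp
  next
    case 5
    have m: "(i+n-2) mod n = i-2" "(i+n-1) mod n = i-1" "(i+1) mod n = i+1" "(i+2) mod n = i+2"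
    proof -
      have e: "i+n-2 = (i-2) + n" using 5 by simp
      have "((i-2) + n) mod n = i-2" by (subst mod_add_self2) (use 5 i in simp)
      then show "(i+n-2) mod n = i-2" unfolding e .
      have e': "i+n-1 = (i-1) + n" using 5 by simp
      have "((i-1) + n) mod n = i-1" by (subst mod_add_self2) (use 5 i in simp)
      then show "(i+n-1) mod n = i-1" unfolding e' .
      show "(i+1) mod n = i+1" "(i+2) mod n = i+2" using 5 by auto
    qed
    show ?thesis
    proof (cases "i < ?t + 2")
      case True
      then show ?thesis using m Tc4[of i] 5 by simp
    next
      case False
      define j where "j = i - ?t"
      define k where "k = j mod 7"
      have j2: "j \<ge> 2" using False j_def by simp
      have k7: "k < 7" by (simp add: k_def)
      have g: "gcol T (i-2) = P7!((k+5) mod 7)" "gcol T (i-1) = P7!((k+6) mod 7)"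
        "gcol T i = P7!k" "gcol T (i+1) = P7!((k+1) mod 7)" "gcol T (i+2) = P7!((k+2) mod 7)"
      proof -
        have ge: "i - 2 \<ge> ?t" "i - 1 \<ge> ?t" "i \<ge> ?t" "i + 1 \<ge> ?t" "i + 2 \<ge> ?t" using False by auto
        have d: "i - 2 - ?t = j - 2" "i - 1 - ?t = j - 1" "i - ?t = j" "i + 1 - ?t = j + 1" "i + 2 - ?t = j + 2"
          using False j_def by auto
        have r: "(j-2) mod 7 = (k+5) mod 7" "(j-1) mod 7 = (k+6) mod 7"
          "(j+1) mod 7 = (k+1) mod 7" "(j+2) mod 7 = (k+2) mod 7"
        proof -
          have a: "j - 2 + 7 = j + 5" "j - 1 + 7 = j + 6" using j2 by auto
          have "(j-2) mod 7 = (j - 2 + 7) mod 7" by simp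
          also have "\<dots> = (j mod 7 + 5) mod 7" unfolding a by (rule mod_add_left_eq[symmetric])
          finally show "(j-2) mod 7 = (k+5) mod 7" unfolding k_def .
          have "(j-1) mod 7 = (j - 1 + 7) mod 7" by simp
          also have "\<dots> = (j mod 7 + 6) mod 7" unfolding a by (rule mod_add_left_eq[symmetric])
          finally show "(j-1) mod 7 = (k+6) mod 7" unfolding k_def .
          show "(j+1) mod 7 = (k+1) mod 7" "(j+2) mod 7 = (k+2) mod 7" unfolding k_def
            by (rule mod_add_left_eq[symmetric])+
        qed
        show "gcol T (i-2) = P7!((k+5) mod 7)" using gcol_per[OF ge(1)] d(1) r(1) by simp
        show "gcol T (i-1) = P7!((k+6) mod 7)" using gcol_per[OF ge(2)] d(2) r(2) by simp
        show "gcol T i = P7!k" using gcol_per[OF ge(3)] d(3) k_def by simp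
        show "gcol T (i+1) = P7!((k+1) mod 7)" using gcol_per[OF ge(4)] d(4) r(3) by simp
        show "gcol T (i+2) = P7!((k+2) mod 7)" using gcol_per[OF ge(5)] d(5) r(4) by simp
      qed
      show ?thesis unfolding m g using P7_ok[OF k7] .
    qed
  qed
qed

definition cyc_ok :: "(nat\<times>nat) list \<Rightarrow> bool" where
  "cyc_ok T \<longleftrightarrow> (let n = length T in
     list_all (\<lambda>i. okw (T ! ((i+n-2) mod n)) (T ! ((i+n-1) mod n)) (T ! i) (T ! ((i+1) mod n)) (T ! ((i+2) mod n))) [0..<n])"

lemma sum_split: "(\<Sum>i<(t::nat)+m. g i) = (\<Sum>i<t. g i) + (\<Sum>i<m. g (t+i) :: nat)"
  by (induction m) auto

lemma sum_P7: "(\<Sum>i<7*q. fst (P7!(i mod 7)) + snd (P7!(i mod 7))) = 8*q"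
proof (induction q)
  case 0 then show ?case by simp
next
  case (Suc q)
  have eq: "7 * Suc q = 7*q + 7" by simp
  have "(\<Sum>i<7*q+7. fst (P7!(i mod 7)) + snd (P7!(i mod 7)))
      = (\<Sum>i<7*q. fst (P7!(i mod 7)) + snd (P7!(i mod 7))) + (\<Sum>i<7. fst (P7!((7*q+i) mod 7)) + snd (P7!((7*q+i) mod 7)))"
    using sum_split[of "\<lambda>i. fst (P7!(i mod 7)) + snd (P7!(i mod 7))" "7*q" 7] by simp
  also have "(\<Sum>i<7. fst (P7!((7*q+i) mod 7)) + snd (P7!((7*q+i) mod 7))) = (\<Sum>i<7. fst (P7!i) + snd (P7!i))"
    by (rule sum.cong) auto
  also have "\<dots> = 8" by (simp add: eval_nat_numeral P7_def)
  finally show ?case unfolding eq using Suc by simp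
qed

lemma weight_gcol: "rdf_weight (gp_vertices (length T + 7*q)) (fc (gcol T)) = (\<Sum>i<length T. fst (T!i) + snd (T!i)) + 8*q"
proof -
  have "rdf_weight (gp_vertices (length T + 7*q)) (fc (gcol T)) = (\<Sum>i<length T + 7*q. fst (gcol T i) + snd (gcol T i))"
    unfolding weight_eq by (simp add: fc_def add.commute)
  also have "\<dots> = (\<Sum>i<length T. fst (gcol T i) + snd (gcol T i)) + (\<Sum>i<7*q. fst (gcol T (length T + i)) + snd (gcol T (length T + i)))"
    by (rule sum_split)
  also have "(\<Sum>i<length T. fst (gcol T i) + snd (gcol T i)) = (\<Sum>i<length T. fst (T!i) + snd (T!i))"
    by (rule sum.cong) (auto simp: gcol_def)
  also have "(\<Sum>i<7*q. fst (gcol T (length T + i)) + snd (gcol T (length T + i))) = (\<Sum>i<7*q. fst (P7!(i mod 7)) + snd (P7!(i mod 7)))"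
    by (rule sum.cong) (auto simp: gcol_def)
  finally show ?thesis using sum_P7 by simp
qed

lemma upper_T:
  assumes T: "tail_ok T" and n: "n = length T + 7*q" and n5: "n \<ge> 5" and qc: "q \<ge> 1 \<or> cyc_ok T"
  shows "is_rdf (gp_vertices n) (gp_edge n 2) (fc (gcol T))"
proof (rule rdf_of_cond[OF n5])
  fix i assume i: "i < n"
  show "fst (gcol T i) \<le> 2 \<and> snd (gcol T i) \<le> 2"
    using T P7_vals[of "(i - length T) mod 7"] unfolding tail_ok_def gcol_def
    by (auto simp: list_all_iff)
  show "okw (gcol T ((i+n-2) mod n)) (gcol T ((i+n-1) mod n)) (gcol T i) (gcol T ((i+1) mod n)) (gcol T ((i+2) mod n))"
  proof (cases "q \<ge> 1")
    case True
    then show ?thesis using generic_ok[OF T n True i] by simp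
  next
    case False
    then have q0: "q = 0" and c: "cyc_ok T" using qc by auto
    have nT: "n = length T" using n q0 by simp
    have p: "0 < n" using n5 by simp
    have m: "(i+n-2) mod n < length T" "(i+n-1) mod n < length T" "(i+1) mod n < length T" "(i+2) mod n < length T"
      using mod_less_divisor[OF p] unfolding nT[symmetric] by blast+
    have "okw (T ! ((i+n-2) mod n)) (T ! ((i+n-1) mod n)) (T ! i) (T ! ((i+1) mod n)) (T ! ((i+2) mod n))"
      using c i nT unfolding cyc_ok_def Let_def list_all_iff by auto
    then show ?thesis using m i nT by (simp add: gcol_def)
  qed
qed

definition A5 :: "(nat\<times>nat) list" where "A5 = [(0,2),(0,0),(2,0),(0,0),(0,2)]"
definition A6 :: "(nat\<times>nat) list" where "A6 = [(0,2),(0,0),(2,0),(0,0),(1,0),(0,2)]"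
definition A8 :: "(nat\<times>nat) list" where "A8 = [(0,2),(0,0),(2,0),(0,1),(0,1),(2,0),(0,0),(0,2)]"
definition A9 :: "(nat\<times>nat) list" where "A9 = [(0,2),(0,0),(2,0),(0,1),(0,1),(2,0),(0,0),(1,0),(0,2)]"

definition tl_r :: "nat \<Rightarrow> (nat\<times>nat) list" where
  "tl_r r = (if r = 0 then [] else if r = 1 then A8 else if r = 2 then A9 else if r = 3 then A5 @ A5
     else if r = 4 then A5 @ A6 else if r = 5 then A5 else A6)"

definition tail_prop :: "nat \<Rightarrow> bool" where
  "tail_prop r \<longleftrightarrow> tail_ok (tl_r r) \<and> length (tl_r r) mod 7 = r \<and> length (tl_r r) \<le> 11 \<and>
    (r \<noteq> 0 \<longrightarrow> cyc_ok (tl_r r) \<and> length (tl_r r) \<ge> 5) \<and>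
    8 * length (tl_r r) \<le> 7 * (\<Sum>i<length (tl_r r). fst (tl_r r!i) + snd (tl_r r!i)) \<and>
    7 * (\<Sum>i<length (tl_r r). fst (tl_r r!i) + snd (tl_r r!i)) < 8 * length (tl_r r) + 7"

lemma tails_all: "list_all tail_prop [0..<7]"
  by code_simp

lemma tails: "r < 7 \<Longrightarrow> tail_prop r"
  using tails_all by (simp add: list_all_iff)



lemma ceil_eq: "8*n \<le> 7*(W::nat) \<Longrightarrow> 7*W < 8*n+7 \<Longrightarrow> nat \<lceil>8 * real n / 7\<rceil> = W"
proof -
  assume a: "8*n \<le> 7*W" "7*W < 8*n+7"
  have "\<lceil>8 * real n / 7\<rceil> = int W"
  proof (rule ceiling_unique)
    have "real (7*W) < real (8*n+7)" using a(2) by linarith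
    then show "real_of_int (int W) - 1 < 8 * real n / 7" by simp
    have "real (8*n) \<le> real (7*W)" using a(1) by linarith
    then show "8 * real n / 7 \<le> real_of_int (int W)" by simp
  qed
  then show ?thesis by simp
qed

lemma ceil_le: "8*n \<le> 7*(x::nat) \<Longrightarrow> nat \<lceil>8 * real n / 7\<rceil> \<le> x"
proof -
  assume a: "8*n \<le> 7*x"
  have "\<lceil>8 * real n / 7\<rceil> \<le> int x"
  proof (rule ceiling_le)
    have "real (8*n) \<le> real (7*x)" using a by linarith
    then show "8 * real n / 7 \<le> real_of_int (int x)" by simp
  qed
  then show ?thesis by (simp only: nat_le_iff)
qed

theorem theorem2p12:
  fixes n :: nat
  assumes "n \<ge> 5"
  shows "roman_domination_number (gp_vertices n) (gp_edge n 2) = nat (ceiling (8 * real n / 7))"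
proof -
  let ?V = "gp_vertices n" and ?E = "gp_edge n 2"
  let ?S = "{rdf_weight ?V f | f. is_rdf ?V ?E f}"
  define r where "r = n mod 7"
  define T where "T = tl_r r"
  have r7: "r < 7" unfolding r_def by simp
  have tp: "tail_prop r" using tails[OF r7] .
  then have tT: "tail_ok T" and tm: "length T mod 7 = r" and t11: "length T \<le> 11"
    and tc: "r \<noteq> 0 \<Longrightarrow> cyc_ok T \<and> length T \<ge> 5"
    and w1: "8 * length T \<le> 7 * (\<Sum>i<length T. fst (T!i) + snd (T!i))"
    and w2: "7 * (\<Sum>i<length T. fst (T!i) + snd (T!i)) < 8 * length T + 7"
    unfolding tail_prop_def T_def by auto
  define a where "a = n div 7"
  define b where "b = length T div 7"
  have na: "n = 7*a + r" unfolding a_def r_def by simp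
  have tb: "length T = 7*b + r"
  proof -
    have "length T = length T div 7 * 7 + length T mod 7" by simp
    then show ?thesis unfolding b_def using tm by linarith
  qed
  have r0: "r = 0 \<Longrightarrow> length T = 0" using tp unfolding tail_prop_def T_def by (simp add: tl_r_def)
  obtain q where nq: "n = length T + 7*q" and qc: "q \<ge> 1 \<or> cyc_ok T"
  proof (cases "a \<ge> b + 1")
    case True
    have "n = length T + 7*(a-b)" using na tb True by (simp add: diff_mult_distrib2)
    then show ?thesis by (rule that) (use True in arith)
  next
    case False
    have "a = b"
    proof (rule ccontr)
      assume "a \<noteq> b"
      then have "a < b" using False by simp
      then show False using na tb t11 assms by linarith
    qed
    then have "n = length T" using na tb by simp
    moreover have "r \<noteq> 0" proof assume "r = 0" then have "length T = 0" by (rule r0) then show False using \<open>n = length T\<close> assms by simp qed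
    ultimately show ?thesis using that[of 0] tc by simp
  qed
  define W where "W = rdf_weight ?V (fc (gcol T))"
  have rdf: "is_rdf ?V ?E (fc (gcol T))" using upper_T[OF tT nq assms qc] .
  have WW: "W = (\<Sum>i<length T. fst (T!i) + snd (T!i)) + 8*q" unfolding W_def nq by (rule weight_gcol)
  have m: "nat \<lceil>8 * real n / 7\<rceil> = W"
    by (rule ceil_eq) (use WW nq w1 w2 in linarith)+
  have mem: "W \<in> ?S" using rdf W_def by blast
  have low: "nat \<lceil>8 * real n / 7\<rceil> \<le> y" if "y \<in> ?S" for y
    using that lower[OF assms] ceil_le by blast
  have fin: "finite ?S"
  proof (rule finite_subset)
    show "?S \<subseteq> {..card ?V * 2}"
    proof
      fix y assume "y \<in> ?S"
      then obtain f where y: "y = rdf_weight ?V f" and f: "is_rdf ?V ?E f" by blast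
      have "\<forall>u\<in>?V. f u \<le> 2" using f unfolding is_rdf_def by auto
      then have "rdf_weight ?V f \<le> card ?V * 2" unfolding rdf_weight_def
        using sum_bounded_above[of ?V f 2] by auto
      then show "y \<in> {..card ?V * 2}" using y by simp
    qed
  qed simp
  have "Min ?S = nat \<lceil>8 * real n / 7\<rceil>"
    by (rule Min_eqI[OF fin]) (use low mem m in auto)
  then show ?thesis unfolding roman_domination_number_def .
qed

end
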